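(* Let $n\ge 1$ and let $\mathcal F \subseteq 2^{[n]}$ be a simply rooted family of sets such that $\emptyset \in \mathcal F$. Then the cubical set $X(\mathcal F)\subseteq \mathbb R^n$ is acyclic.
   Context: $[n]=\{1,\dots,n\}$ and $2^{[n]}$ is its power set. For $A,B\in 2^{[n]}$, $[A,B]=\{C\in 2^{[n]}: A\subseteq C\subseteq B\}$, and $[i,B]$ means $[\{i\},B]$. A family $\mathcal F\subseteq 2^{[n]}$ is simply rooted if for every non-empty $A\in\mathcal F$ there is $i\in A$ with $[i,A]\subseteq \mathcal F$. The set of cubes of $\mathcal F$ is $\mathcal C(\mathcal F)=\{[A,B]: A\subseteq B,\ [A,B]\subseteq \mathcal F\}$. For $A\subseteq B$, the geometric realization $|[A,B]|$ is $I_1\times\dots\times I_n\subseteq\mathbb R^n$ where $I_i=\{1\}$ if $i\in A$, $I_i=[0,1]$ if $i\in B\setminus A$, and $I_i=\{0\}$ if $i\notin B$. The geometric realization of $\mathcal F$ is the cubical set $X(\mathcal F)=\bigcup_{[A,B]\in\mathcal C(\mathcal F)}|[A,B]|$. A cubical set (finite union of elementary cubes, i.e. products of intervals $[a,b]$ with $a,b\in\mathbb Z$, $b-a\in\{0,1\}$) $X$ is acyclic if it is non-empty and connected and its cubical homology groups $H_i(X)$ are trivial for all $i\ge 1$. *)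

theory Defs
  imports "HOL-Analysis.Analysis"
begin

(* Points of R^n are functions nat => real, coordinates indexed by [n] = {1..n},
   and all coordinates outside {1..n} equal to 0. *)

definition ival :: "nat set \<Rightarrow> nat set \<Rightarrow> nat set set" where
  "ival A B = {C. A \<subseteq> C \<and> C \<subseteq> B}"

definition simply_rooted :: "nat set set \<Rightarrow> bool" where
  "simply_rooted F \<longleftrightarrow> (\<forall>A\<in>F. A \<noteq> {} \<longrightarrow> (\<exists>i\<in>A. ival {i} A \<subseteq> F))"

definition cubes_of :: "nat set set \<Rightarrow> (nat set \<times> nat set) set" where
  "cubes_of F = {(A, B). A \<subseteq> B \<and> ival A B \<subseteq> F}"

definition geom_real :: "nat set \<Rightarrow> nat set \<Rightarrow> (nat \<Rightarrow> real) set" where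
  "geom_real A B = {x. \<forall>i. (i \<in> A \<longrightarrow> x i = 1)
                          \<and> (i \<in> B - A \<longrightarrow> 0 \<le> x i \<and> x i \<le> 1)
                          \<and> (i \<notin> B \<longrightarrow> x i = 0)}"

definition XF :: "nat set set \<Rightarrow> (nat \<Rightarrow> real) set" where
  "XF F = (\<Union>(A, B)\<in>cubes_of F. geom_real A B)"

(* An elementary cube: coordinate i carries (a, d) meaning interval [a, a+1] if d,
   degenerate [a,a] otherwise. *)
type_synonym ecube = "nat \<Rightarrow> int \<times> bool"

definition elem_cube :: "nat \<Rightarrow> ecube \<Rightarrow> bool" where
  "elem_cube n Q \<longleftrightarrow> (\<forall>i. i \<notin> {1..n} \<longrightarrow> Q i = (0, False))"

definition cube_set :: "ecube \<Rightarrow> (nat \<Rightarrow> real) set" where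
  "cube_set Q = {x. \<forall>i. of_int (fst (Q i)) \<le> x i \<and>
                        x i \<le> of_int (fst (Q i)) + (if snd (Q i) then 1 else 0)}"

definition cdim :: "ecube \<Rightarrow> nat" where
  "cdim Q = card {i. snd (Q i)}"

definition face_lo :: "ecube \<Rightarrow> nat \<Rightarrow> ecube" where
  "face_lo Q j = Q(j := (fst (Q j), False))"

definition face_hi :: "ecube \<Rightarrow> nat \<Rightarrow> ecube" where
  "face_hi Q j = Q(j := (fst (Q j) + 1, False))"

definition bd_cube :: "ecube \<Rightarrow> ecube \<Rightarrow> int" where
  "bd_cube Q = (\<lambda>P. \<Sum>j\<in>{j. snd (Q j)}.
      (-1) ^ card {i. i < j \<and> snd (Q i)} *
      ((if P = face_hi Q j then 1 else 0) - (if P = face_lo Q j then 1 else 0)))"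

definition bd :: "(ecube \<Rightarrow> int) \<Rightarrow> ecube \<Rightarrow> int" where
  "bd c = (\<lambda>P. \<Sum>Q\<in>{Q. c Q \<noteq> 0}. c Q * bd_cube Q P)"

definition chains :: "nat \<Rightarrow> (nat \<Rightarrow> real) set \<Rightarrow> nat \<Rightarrow> (ecube \<Rightarrow> int) set" where
  "chains n X k = {c. finite {Q. c Q \<noteq> 0} \<and>
     (\<forall>Q. c Q \<noteq> 0 \<longrightarrow> elem_cube n Q \<and> cdim Q = k \<and> cube_set Q \<subseteq> X)}"

definition homology_trivial :: "nat \<Rightarrow> (nat \<Rightarrow> real) set \<Rightarrow> nat \<Rightarrow> bool" where
  "homology_trivial n X k \<longleftrightarrow>
     (\<forall>c\<in>chains n X k. bd c = (\<lambda>_. 0) \<longrightarrow> (\<exists>d\<in>chains n X (Suc k). bd d = c))"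

definition acyclic_cubical :: "nat \<Rightarrow> (nat \<Rightarrow> real) set \<Rightarrow> bool" where
  "acyclic_cubical n X \<longleftrightarrow> X \<noteq> {} \<and> connected X \<and> (\<forall>k\<ge>1. homology_trivial n X k)"

end

theory Submission
  imports Defs
begin


definition supp :: "(ecube \<Rightarrow> int) \<Rightarrow> ecube set" where
  "supp c = {Q. c Q \<noteq> 0}"

lemma bd_sum:
  assumes "finite S" "supp c \<subseteq> S"
  shows "bd c P = (\<Sum>Q\<in>S. c Q * bd_cube Q P)"
proof -
  have "finite {Q. c Q \<noteq> 0}" using assms finite_subset unfolding supp_def by blast
  have "(\<Sum>Q\<in>S. c Q * bd_cube Q P) = (\<Sum>Q\<in>{Q. c Q \<noteq> 0}. c Q * bd_cube Q P)"
    by (rule sum.mono_neutral_right) (use assms in \<open>auto simp: supp_def\<close>)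
  then show ?thesis unfolding bd_def by simp
qed

lemma bd_lin:
  assumes "finite (supp c1)" "finite (supp c2)"
  shows "bd (\<lambda>Q. c1 Q + a * c2 Q) = (\<lambda>P. bd c1 P + a * bd c2 P)"
proof
  fix P
  let ?S = "supp c1 \<union> supp c2"
  have s: "supp (\<lambda>Q. c1 Q + a * c2 Q) \<subseteq> ?S" by (auto simp: supp_def)
  show "bd (\<lambda>Q. c1 Q + a * c2 Q) P = bd c1 P + a * bd c2 P"
    using assms
    by (simp add: bd_sum[OF _ s] bd_sum[of ?S c1] bd_sum[of ?S c2] supp_def sum.distrib
        sum_distrib_left algebra_simps)
qed

lemma bd_delta:
  "bd (\<lambda>Q. if Q = t then a else 0) = (\<lambda>P. a * bd_cube t P)"
proof
  fix P
  have "bd (\<lambda>Q. if Q = t then a else 0) P = (\<Sum>Q\<in>{t}. (if Q = t then a else 0) * bd_cube Q P)"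
    by (rule bd_sum) (auto simp: supp_def)
  then show "bd (\<lambda>Q. if Q = t then a else 0) P = a * bd_cube t P" by simp
qed

lemma bd_cube_nz:
  assumes "bd_cube Q P \<noteq> 0"
  shows "\<exists>j. snd (Q j) \<and> (P = face_hi Q j \<or> P = face_lo Q j)"
proof (rule ccontr)
  assume "\<not> ?thesis"
  then have "bd_cube Q P = 0" unfolding bd_cube_def by (intro sum.neutral) auto
  with assms show False by simp
qed

lemma face_hi_ne: "snd (Q j) \<Longrightarrow> face_hi Q j \<noteq> face_lo Q l"
  "snd (Q j) \<Longrightarrow> l \<noteq> j \<Longrightarrow> face_hi Q j \<noteq> face_hi Q l"
  "snd (Q j) \<Longrightarrow> l \<noteq> j \<Longrightarrow> face_hi Q j \<noteq> face_lo Q l"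
proof -
  show "snd (Q j) \<Longrightarrow> face_hi Q j \<noteq> face_lo Q l"
  proof
    assume "snd (Q j)" "face_hi Q j = face_lo Q l"
    then have "fst (face_hi Q j j) = fst (face_lo Q l j)" "snd (face_hi Q j j) = snd (face_lo Q l j)" by simp_all
    with \<open>snd (Q j)\<close> show False by (cases "j = l") (auto simp: face_hi_def face_lo_def)
  qed
  show "snd (Q j) \<Longrightarrow> l \<noteq> j \<Longrightarrow> face_hi Q j \<noteq> face_hi Q l"
  proof
    assume "snd (Q j)" "l \<noteq> j" "face_hi Q j = face_hi Q l"
    then have "snd (face_hi Q j j) = snd (face_hi Q l j)" by simp
    with \<open>snd (Q j)\<close> \<open>l \<noteq> j\<close> show False by (auto simp: face_hi_def)
  qed
  show "snd (Q j) \<Longrightarrow> l \<noteq> j \<Longrightarrow> face_hi Q j \<noteq> face_lo Q l"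
  proof
    assume "snd (Q j)" "l \<noteq> j" "face_hi Q j = face_lo Q l"
    then have "snd (face_hi Q j j) = snd (face_lo Q l j)" by simp
    with \<open>snd (Q j)\<close> \<open>l \<noteq> j\<close> show False by (auto simp: face_hi_def face_lo_def)
  qed
qed

definition sgn_at :: "ecube \<Rightarrow> nat \<Rightarrow> int" where
  "sgn_at Q j = (-1) ^ card {i. i < j \<and> snd (Q i)}"

lemma bd_cube_alt: "bd_cube Q P = (\<Sum>j\<in>{j. snd (Q j)}. sgn_at Q j *
      ((if P = face_hi Q j then 1 else 0) - (if P = face_lo Q j then 1 else 0)))"
  unfolding bd_cube_def sgn_at_def by simp

lemma sgn_at_sq: "sgn_at Q j * sgn_at Q j = 1"
  unfolding sgn_at_def by (simp add: power_mult_distrib[symmetric])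

lemma bd_cube_hi:
  assumes "finite {j. snd (Q j)}" "snd (Q j)"
  shows "bd_cube Q (face_hi Q j) = sgn_at Q j"
proof -
  have "bd_cube Q (face_hi Q j) = (\<Sum>l\<in>{j. snd (Q j)}. if l = j then sgn_at Q j else 0)"
    unfolding bd_cube_alt
    by (rule sum.cong) (use assms face_hi_ne in \<open>auto\<close>)
  also have "\<dots> = sgn_at Q j" using assms by simp
  finally show ?thesis .
qed

lemma snd_face_hi: "{i. snd (face_hi Q j i)} = {i. snd (Q i)} - {j}"
  by (auto simp: face_hi_def)
lemma snd_face_lo: "{i. snd (face_lo Q j i)} = {i. snd (Q i)} - {j}"
  by (auto simp: face_lo_def)

lemma cdim_face:
  assumes "finite {i. snd (Q i)}" "snd (Q j)"
  shows "cdim (face_hi Q j) = cdim Q - 1" "cdim (face_lo Q j) = cdim Q - 1"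
  using assms by (simp_all add: cdim_def snd_face_hi snd_face_lo)

lemma bd_cube_nz_cdim:
  assumes "finite {i. snd (Q i)}" "bd_cube Q P \<noteq> 0"
  shows "cdim P = cdim Q - 1" "cdim Q \<ge> 1"
proof -
  obtain j where j: "snd (Q j)" "P = face_hi Q j \<or> P = face_lo Q j"
    using bd_cube_nz[OF assms(2)] by blast
  then show "cdim P = cdim Q - 1" using cdim_face[OF assms(1)] by auto
  have "j \<in> {i. snd (Q i)}" using j by simp
  then show "cdim Q \<ge> 1" unfolding cdim_def using assms(1)
    by (metis One_nat_def Suc_leI card_gt_0_iff empty_iff)
qed

lemma supp_bd_cube:
  "supp (bd_cube Q) \<subseteq> (\<lambda>j. face_hi Q j) ` {j. snd (Q j)} \<union> (\<lambda>j. face_lo Q j) ` {j. snd (Q j)}"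
  using bd_cube_nz unfolding supp_def by blast

lemma finite_supp_bd_cube:
  "finite {i. snd (Q i)} \<Longrightarrow> finite (supp (bd_cube Q))"
  by (rule finite_subset[OF supp_bd_cube]) simp

definition sg2 :: "ecube \<Rightarrow> nat \<Rightarrow> nat \<Rightarrow> int" where
  "sg2 Q j l = (-1) ^ card {i. i < l \<and> snd (Q i) \<and> i \<noteq> j}"

lemma sgn_at_face: "sgn_at (face_hi Q j) l = sg2 Q j l" "sgn_at (face_lo Q j) l = sg2 Q j l"
proof -
  have "{i. i < l \<and> snd (face_hi Q j i)} = {i. i < l \<and> snd (Q i) \<and> i \<noteq> j}"
       "{i. i < l \<and> snd (face_lo Q j i)} = {i. i < l \<and> snd (Q i) \<and> i \<noteq> j}"
    by (auto simp: face_hi_def face_lo_def)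
  then show "sgn_at (face_hi Q j) l = sg2 Q j l" "sgn_at (face_lo Q j) l = sg2 Q j l"
    by (simp_all add: sgn_at_def sg2_def)
qed

lemma sign_anti_lt:
  assumes "finite {i. snd (Q i)}" "snd (Q j)" "j < l"
  shows "sgn_at Q j * sg2 Q j l = - (sgn_at Q l * sg2 Q l j)"
proof -
  have e1: "{i. i < j \<and> snd (Q i) \<and> i \<noteq> l} = {i. i < j \<and> snd (Q i)}" using assms by auto
  have e2: "{i. i < l \<and> snd (Q i)} = insert j {i. i < l \<and> snd (Q i) \<and> i \<noteq> j}" using assms by auto
  have fin: "finite {i. i < l \<and> snd (Q i) \<and> i \<noteq> j}" by simp
  have "sgn_at Q l = - sg2 Q j l"
    unfolding sgn_at_def sg2_def e2 using fin by simp
  moreover have "sg2 Q l j = sgn_at Q j" unfolding sgn_at_def sg2_def e1 ..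
  ultimately show ?thesis by simp
qed

lemma sign_anti:
  assumes "finite {i. snd (Q i)}" "snd (Q j)" "snd (Q l)" "j \<noteq> l"
  shows "sgn_at Q j * sg2 Q j l = - (sgn_at Q l * sg2 Q l j)"
proof (cases "j < l")
  case True then show ?thesis using sign_anti_lt assms by blast
next
  case False then have "l < j" using assms by simp
  then show ?thesis using sign_anti_lt[of Q l j] assms by simp
qed

lemma face_comm:
  assumes "j \<noteq> l"
  shows "face_hi (face_hi Q j) l = face_hi (face_hi Q l) j"
        "face_lo (face_hi Q j) l = face_hi (face_lo Q l) j"
        "face_lo (face_lo Q j) l = face_lo (face_lo Q l) j"
  using assms by (auto simp: face_hi_def face_lo_def fun_upd_twist)

lemma antisym_sum_zero:
  fixes f :: "nat \<Rightarrow> nat \<Rightarrow> int"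
  assumes "finite J" "\<And>j l. j \<in> J \<Longrightarrow> l \<in> J \<Longrightarrow> j \<noteq> l \<Longrightarrow> f l j = - f j l"
  shows "(\<Sum>j\<in>J. \<Sum>l\<in>J-{j}. f j l) = 0"
proof -
  have a: "(\<Sum>j\<in>J. \<Sum>l\<in>J-{j}. f j l) = (\<Sum>j\<in>J. \<Sum>l\<in>J. if l \<noteq> j then f j l else 0)"
  proof (rule sum.cong[OF refl])
    fix j assume "j \<in> J"
    have "{l \<in> J. l \<noteq> j} = J - {j}" by auto
    then show "(\<Sum>l\<in>J-{j}. f j l) = (\<Sum>l\<in>J. if l \<noteq> j then f j l else 0)"
      using assms(1) sum.inter_filter[of J "f j" "\<lambda>l. l \<noteq> j"] by simp
  qed
  have "(\<Sum>j\<in>J. \<Sum>l\<in>J. if l \<noteq> j then f j l else 0) = (\<Sum>l\<in>J. \<Sum>j\<in>J. if l \<noteq> j then f j l else 0)"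
    by (rule sum.swap)
  also have "\<dots> = (\<Sum>l\<in>J. \<Sum>j\<in>J. - (if j \<noteq> l then f l j else 0))"
  proof (rule sum.cong[OF refl], rule sum.cong[OF refl])
    fix l j assume "l \<in> J" "j \<in> J"
    then show "(if l \<noteq> j then f j l else 0) = - (if j \<noteq> l then f l j else 0)"
      using assms(2)[of l j] by (cases "l = j") simp_all
  qed
  also have "\<dots> = - (\<Sum>l\<in>J. \<Sum>j\<in>J. if j \<noteq> l then f l j else 0)"
    by (simp add: sum_negf)
  finally show ?thesis using a by linarith
qed

lemma bd_bd_cube:
  assumes fin: "finite {i. snd (Q i)}"
  shows "bd (bd_cube Q) = (\<lambda>_. 0)"
proof
  fix P
  define J where "J = {i. snd (Q i)}"
  define FS where "FS = (\<lambda>j. face_hi Q j) ` J \<union> (\<lambda>j. face_lo Q j) ` J"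
  have fJ: "finite J" using fin J_def by simp
  have fFS: "finite FS" using fJ FS_def by simp
  define g where "g j l = (if P = face_hi (face_hi Q j) l then 1 else 0)
     - (if P = face_lo (face_hi Q j) l then 1 else 0)
     - (if P = face_hi (face_lo Q j) l then 1 else 0)
     + (if P = face_lo (face_lo Q j) l then (1::int) else 0)" for j l
  have "bd (bd_cube Q) P = (\<Sum>R\<in>FS. bd_cube Q R * bd_cube R P)"
    by (rule bd_sum[OF fFS]) (use supp_bd_cube in \<open>simp add: FS_def J_def\<close>)
  also have "\<dots> = (\<Sum>R\<in>FS. \<Sum>j\<in>J. sgn_at Q j *
      ((if R = face_hi Q j then 1 else 0) - (if R = face_lo Q j then 1 else 0)) * bd_cube R P)"
    unfolding bd_cube_alt[of Q] J_def by (simp add: sum_distrib_right)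
  also have "\<dots> = (\<Sum>j\<in>J. \<Sum>R\<in>FS. sgn_at Q j *
      ((if R = face_hi Q j then 1 else 0) - (if R = face_lo Q j then 1 else 0)) * bd_cube R P)"
    by (rule sum.swap)
  also have "\<dots> = (\<Sum>j\<in>J. sgn_at Q j * (bd_cube (face_hi Q j) P - bd_cube (face_lo Q j) P))"
  proof (rule sum.cong[OF refl])
    fix j assume j: "j \<in> J"
    have "(\<Sum>R\<in>FS. sgn_at Q j *
      ((if R = face_hi Q j then 1 else 0) - (if R = face_lo Q j then 1 else 0)) * bd_cube R P)
      = (\<Sum>R\<in>FS. sgn_at Q j * (if R = face_hi Q j then bd_cube R P else 0)
          - sgn_at Q j * (if R = face_lo Q j then bd_cube R P else 0))"
      by (intro sum.cong refl) (auto simp: algebra_simps)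
    also have "\<dots> = sgn_at Q j * (bd_cube (face_hi Q j) P - bd_cube (face_lo Q j) P)"
      using j fFS by (simp add: sum_subtractf sum_distrib_left[symmetric] FS_def algebra_simps)
    finally show "(\<Sum>R\<in>FS. sgn_at Q j *
      ((if R = face_hi Q j then 1 else 0) - (if R = face_lo Q j then 1 else 0)) * bd_cube R P)
      = sgn_at Q j * (bd_cube (face_hi Q j) P - bd_cube (face_lo Q j) P)" .
  qed
  also have "\<dots> = (\<Sum>j\<in>J. \<Sum>l\<in>J-{j}. sgn_at Q j * sg2 Q j l * g j l)"
  proof (rule sum.cong[OF refl])
    fix j assume j: "j \<in> J"
    have "bd_cube (face_hi Q j) P - bd_cube (face_lo Q j) P =
       (\<Sum>l\<in>J-{j}. sg2 Q j l * g j l)"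
      unfolding bd_cube_alt snd_face_hi snd_face_lo sgn_at_face J_def[symmetric]
      by (simp add: sum_subtractf[symmetric] g_def algebra_simps)
    then show "sgn_at Q j * (bd_cube (face_hi Q j) P - bd_cube (face_lo Q j) P) =
      (\<Sum>l\<in>J-{j}. sgn_at Q j * sg2 Q j l * g j l)"
      by (simp add: sum_distrib_left mult.assoc)
  qed
  also have "\<dots> = 0"
  proof (rule antisym_sum_zero[OF fJ])
    fix j l assume jl: "j \<in> J" "l \<in> J" "j \<noteq> l"
    have "g l j = g j l" unfolding g_def using face_comm[OF jl(3)] face_comm[of l j] jl(3)
      by (simp add: eq_commute[of j l])
    then show "sgn_at Q l * sg2 Q l j * g l j = - (sgn_at Q j * sg2 Q j l * g j l)"
      using sign_anti[of Q j l] jl fin unfolding J_def by simp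
  qed
  finally show "bd (bd_cube Q) P = 0" .
qed



definition chK :: "ecube set \<Rightarrow> nat \<Rightarrow> (ecube \<Rightarrow> int) set" where
  "chK K k = {c. finite (supp c) \<and> (\<forall>Q. c Q \<noteq> 0 \<longrightarrow> Q \<in> K \<and> cdim Q = k)}"

definition acycK :: "ecube set \<Rightarrow> bool" where
  "acycK K \<longleftrightarrow> (\<forall>k\<ge>1. \<forall>c\<in>chK K k. bd c = (\<lambda>_. 0) \<longrightarrow> (\<exists>d\<in>chK K (Suc k). bd d = c))"

definition fclosed :: "ecube set \<Rightarrow> bool" where
  "fclosed K \<longleftrightarrow> (\<forall>Q\<in>K. \<forall>P. bd_cube Q P \<noteq> 0 \<longrightarrow> P \<in> K)"

definition fin_dims :: "ecube set \<Rightarrow> bool" where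
  "fin_dims K \<longleftrightarrow> (\<forall>Q\<in>K. finite {i. snd (Q i)})"

lemma bd_zero: "bd (\<lambda>_. 0) = (\<lambda>_. 0)"
  unfolding bd_def by simp

lemma collapse:
  assumes fc: "fclosed K" and fd: "fin_dims K" and tK: "t \<in> K" and sj: "snd (t j)"
    and sdef: "s = face_hi t j"
    and free: "\<forall>R\<in>K. bd_cube R s \<noteq> 0 \<longrightarrow> R = t"
    and IH: "acycK (K - {s, t})"
  shows "acycK K"
  unfolding acycK_def
proof (intro allI impI ballI)
  fix k c assume k: "k \<ge> 1" and c: "c \<in> chK K k" and bc: "bd c = (\<lambda>_. 0)"
  define K' where "K' = K - {s, t}"
  define e where "e = bd_cube t s"
  have ft: "finite {i. snd (t i)}" using fd tK unfolding fin_dims_def by blast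
  have e: "e = sgn_at t j" unfolding e_def sdef using bd_cube_hi[OF ft sj] .
  have ee: "e * e = 1" using e sgn_at_sq by simp
  have bts: "bd_cube t s \<noteq> 0" using ee unfolding e_def by auto
  then have sK: "s \<in> K" using fc tK unfolding fclosed_def by blast
  have cdt: "cdim t \<ge> 1" "cdim s = cdim t - 1"
    using bd_cube_nz_cdim[OF ft bts] by auto
  have tt: "bd_cube t t = 0"
  proof (rule ccontr)
    assume "bd_cube t t \<noteq> 0"
    from bd_cube_nz_cdim[OF ft this] show False by linarith
  qed
  have fsc: "finite (supp c)" using c unfolding chK_def by simp
  have cK: "\<And>Q. c Q \<noteq> 0 \<Longrightarrow> Q \<in> K \<and> cdim Q = k" using c unfolding chK_def by simp
  have "bd c s = (\<Sum>Q\<in>insert t (supp c). c Q * bd_cube Q s)"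
    by (rule bd_sum) (use fsc in auto)
  also have "\<dots> = (\<Sum>Q\<in>insert t (supp c). if Q = t then c t * e else 0)"
    by (rule sum.cong[OF refl]) (use free cK in \<open>auto simp: e_def supp_def\<close>)
  also have "\<dots> = c t * e" using fsc by simp
  finally have "c t * e = 0" using bc by simp
  then have ct: "c t = 0" using ee by auto
  show "\<exists>d\<in>chK K (Suc k). bd d = c"
  proof (cases "c s = 0")
    case True
    have "c \<in> chK K' k" using c True ct unfolding chK_def K'_def by auto
    then obtain d where "d \<in> chK K' (Suc k)" "bd d = c"
      using IH k bc unfolding acycK_def K'_def by blast
    then show ?thesis unfolding chK_def K'_def by auto
  next
    case False
    then have cds: "cdim s = k" using cK by blast
    then have cdt2: "cdim t = Suc k" using cdt by simp
    define a where "a = c s * e"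
    define c' where "c' = (\<lambda>Q. c Q + (- a) * bd_cube t Q)"
    have fsb: "finite (supp (bd_cube t))" using finite_supp_bd_cube[OF ft] .
    have bc': "bd c' = (\<lambda>_. 0)"
      unfolding c'_def bd_lin[OF fsc fsb] bd_bd_cube[OF ft] bc by simp
    have "supp c' \<subseteq> supp c \<union> supp (bd_cube t)" unfolding c'_def supp_def by auto
    then have fsc': "finite (supp c')" using fsc fsb finite_subset by blast
    have c's: "c' s = 0" unfolding c'_def a_def e_def[symmetric]
      using ee by (simp add: algebra_simps)
    have c't: "c' t = 0" unfolding c'_def using ct tt by simp
    have "c' \<in> chK K' k"
      unfolding chK_def K'_def
    proof (rule CollectI, rule conjI[OF fsc'], intro allI impI)
      fix Q assume Q: "c' Q \<noteq> 0"
      then have "Q \<noteq> s" "Q \<noteq> t" using c's c't by auto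
      moreover have "Q \<in> K \<and> cdim Q = k"
      proof (cases "bd_cube t Q = 0")
        case True
        then show ?thesis using Q cK unfolding c'_def by auto
      next
        case False
        then show ?thesis using fc tK bd_cube_nz_cdim[OF ft False] cdt2
          unfolding fclosed_def by auto
      qed
      ultimately show "Q \<in> K - {s, t} \<and> cdim Q = k" by auto
    qed
    then obtain d' where d': "d' \<in> chK K' (Suc k)" "bd d' = c'"
      using IH k bc' unfolding acycK_def K'_def by blast
    define d where "d = (\<lambda>Q. d' Q + a * (if Q = t then 1 else 0))"
    have fd': "finite (supp d')" using d' unfolding chK_def by simp
    have fdt: "finite (supp (\<lambda>Q. if Q = t then (1::int) else 0))" unfolding supp_def by simp
    have "bd d = c"
      unfolding d_def bd_lin[OF fd' fdt] d'(2) bd_delta[of t 1]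
      by (simp add: c'_def)
    moreover have "d \<in> chK K (Suc k)"
    proof -
      have "supp d \<subseteq> supp d' \<union> {t}" unfolding d_def supp_def by auto
      then have "finite (supp d)" using fd' finite_subset by auto
      moreover have "\<forall>Q. d Q \<noteq> 0 \<longrightarrow> Q \<in> K \<and> cdim Q = Suc k"
        using d'(1) tK cdt2 unfolding d_def chK_def K'_def by (auto split: if_splits)
      ultimately show ?thesis unfolding chK_def by simp
    qed
    ultimately show ?thesis by blast
  qed
qed

lemma acycK_single:
  assumes "{i. snd (v i)} = {}"
  shows "acycK {v}"
  unfolding acycK_def
proof (intro allI impI ballI)
  fix k c assume k: "k \<ge> (1::nat)" and c: "c \<in> chK {v} k" and "bd c = (\<lambda>_. 0)"
  have cdv: "cdim v = 0" using assms unfolding cdim_def by simp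
  have "c = (\<lambda>_. 0)"
  proof
    fix Q show "c Q = 0" using c k cdv unfolding chK_def by auto
  qed
  then show "\<exists>d\<in>chK {v} (Suc k). bd d = c"
    by (intro bexI[of _ "\<lambda>_. 0"]) (auto simp: bd_zero chK_def supp_def)
qed

lemma bd_cube_novert: "{i. snd (v i)} = {} \<Longrightarrow> bd_cube v P = 0"
  unfolding bd_cube_def by simp

lemma morse:
  fixes mate :: "ecube \<Rightarrow> ecube" and kap :: "ecube \<Rightarrow> nat"
  assumes fK0: "finite K0" and vK0: "v \<in> K0" and vd: "{i. snd (v i)} = {}"
    and fd0: "fin_dims K0"
    and mate: "\<forall>Q\<in>K0-{v}. mate Q \<in> K0 - {v} \<and> mate (mate Q) = Q \<and> kap (mate Q) = kap Q \<and>
        ((\<exists>j. snd (Q j) \<and> mate Q = face_hi Q j) \<or> (\<exists>j. snd (mate Q j) \<and> Q = face_hi (mate Q) j))"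
    and coface: "\<forall>Q\<in>K0-{v}. \<forall>R\<in>K0. bd_cube R Q \<noteq> 0 \<longrightarrow> R \<noteq> mate Q \<longrightarrow> kap Q < kap R"
  shows "K \<subseteq> K0 \<Longrightarrow> v \<in> K \<Longrightarrow> fclosed K \<Longrightarrow> (\<forall>Q\<in>K-{v}. mate Q \<in> K) \<Longrightarrow> acycK K"
proof (induction "card K" arbitrary: K rule: less_induct)
  case less
  show ?case
  proof (cases "K = {v}")
    case True then show ?thesis using acycK_single[OF vd] by simp
  next
    case False
    have fK: "finite K" using less.prems(1) fK0 finite_subset by blast
    have ne: "K - {v} \<noteq> {}" using False less.prems(2) by auto
    define m where "m = Max (kap ` (K - {v}))"
    have "m \<in> kap ` (K - {v})" unfolding m_def using fK ne by (intro Max_in) auto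
    then obtain Q where Q: "Q \<in> K - {v}" "kap Q = m" by blast
    have mx: "\<And>R. R \<in> K - {v} \<Longrightarrow> kap R \<le> m" unfolding m_def using fK by (intro Max_ge) auto
    have QK0: "Q \<in> K0 - {v}" using Q less.prems(1) by auto
    have mQ: "mate Q \<in> K - {v}" "mate (mate Q) = Q" "kap (mate Q) = kap Q"
      using mate QK0 Q less.prems(4) by auto
    obtain s t j where st: "snd (t j)" "s = face_hi t j" "mate s = t" "mate t = s"
      "kap s = m" "kap t = m" "s \<in> K - {v}" "t \<in> K - {v}"
    proof (cases "\<exists>j. snd (Q j) \<and> mate Q = face_hi Q j")
      case True
      then obtain j where "snd (Q j)" "mate Q = face_hi Q j" by blast
      then show ?thesis by (intro that[of Q j "mate Q"]) (use mQ Q in simp_all)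
    next
      case False
      then obtain j where "snd (mate Q j)" "Q = face_hi (mate Q) j" using mate QK0 by blast
      then show ?thesis by (intro that[of "mate Q" j Q]) (use mQ Q in simp_all)
    qed
    have nov: "\<And>R P. bd_cube R P \<noteq> 0 \<Longrightarrow> R \<noteq> v" using bd_cube_novert[OF vd] by metis
    define K' where "K' = K - {s, t}"
    have sub0: "K' \<subseteq> K0" using less.prems(1) K'_def by auto
    have vK': "v \<in> K'" using less.prems(2) st K'_def by auto
    have cardK': "card K' < card K" unfolding K'_def using fK st(7)
      by (intro psubset_card_mono) auto
    have mK': "\<forall>R\<in>K'-{v}. mate R \<in> K'"
    proof
      fix R assume R: "R \<in> K' - {v}"
      then have "mate R \<in> K" using less.prems(4) K'_def by auto
      moreover have "mate (mate R) = R" using R mate sub0 by auto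
      moreover have "R \<noteq> s" "R \<noteq> t" using R K'_def by auto
      ultimately have "mate R \<noteq> s" "mate R \<noteq> t" using st(3,4) by metis+
      with \<open>mate R \<in> K\<close> show "mate R \<in> K'" unfolding K'_def by auto
    qed
    have fcK': "fclosed K'"
      unfolding fclosed_def
    proof (intro ballI allI impI)
      fix R P assume R: "R \<in> K'" and P: "bd_cube R P \<noteq> 0"
      have PK: "P \<in> K" using less.prems(3) R P unfolding fclosed_def K'_def by auto
      show "P \<in> K'"
      proof (rule ccontr)
        assume "P \<notin> K'"
        then have Pst: "P = s \<or> P = t" using PK K'_def by auto
        then have "P \<in> K0 - {v}" "mate P \<in> {s, t}" using st less.prems(1) by auto
        moreover have "R \<in> K0" using R sub0 by auto
        moreover have "R \<noteq> mate P" using R \<open>mate P \<in> {s,t}\<close> K'_def by auto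
        ultimately have "kap P < kap R" using coface P by blast
        moreover have "kap R \<le> m" using mx R nov[OF P] K'_def by auto
        ultimately show False using Pst st by auto
      qed
    qed
    have free: "\<forall>R\<in>K. bd_cube R s \<noteq> 0 \<longrightarrow> R = t"
    proof (intro ballI impI)
      fix R assume R: "R \<in> K" "bd_cube R s \<noteq> 0"
      show "R = t"
      proof (rule ccontr)
        assume "R \<noteq> t"
        then have "kap s < kap R" using coface st R less.prems(1) by auto
        moreover have "kap R \<le> m" using mx R nov[OF R(2)] by auto
        ultimately show False using st by auto
      qed
    qed
    have "acycK K'" using less.hyps[OF cardK' sub0 vK' fcK' mK'] .
    moreover have "fin_dims K" using fd0 less.prems(1) unfolding fin_dims_def by auto
    ultimately show ?thesis
      using collapse[OF less.prems(3) _ _ st(1) st(2) free] st K'_def by auto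
  qed
qed



definition rt :: "nat set set \<Rightarrow> nat set \<Rightarrow> nat" where
  "rt F M = (if \<exists>i\<in>M. ival {i} M \<subseteq> F then (SOME i. i \<in> M \<and> ival {i} M \<subseteq> F) else (SOME i. i \<in> M))"

lemma rt_in: "M \<noteq> {} \<Longrightarrow> rt F M \<in> M"
proof -
  assume "M \<noteq> {}"
  then have e: "\<exists>i. i \<in> M" by auto
  show ?thesis
  proof (cases "\<exists>i\<in>M. ival {i} M \<subseteq> F")
    case True
    then have "\<exists>i. i \<in> M \<and> ival {i} M \<subseteq> F" by blast
    from someI_ex[OF this] True show ?thesis unfolding rt_def by simp
  next
    case False
    from someI_ex[OF e] False show ?thesis unfolding rt_def by simp
  qed
qed

lemma rt_root: "simply_rooted F \<Longrightarrow> M \<in> F \<Longrightarrow> M \<noteq> {} \<Longrightarrow> ival {rt F M} M \<subseteq> F"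
proof -
  assume "simply_rooted F" "M \<in> F" "M \<noteq> {}"
  then have T: "\<exists>i\<in>M. ival {i} M \<subseteq> F" unfolding simply_rooted_def by blast
  then have "\<exists>i. i \<in> M \<and> ival {i} M \<subseteq> F" by blast
  from someI_ex[OF this] T show ?thesis unfolding rt_def by simp
qed

definition sq :: "nat set set \<Rightarrow> nat set \<Rightarrow> nat \<Rightarrow> nat set" where
  "sq F B s = ((\<lambda>M. M - {rt F M}) ^^ s) B"

lemma sq_0[simp]: "sq F B 0 = B" by (simp add: sq_def)
lemma sq_Suc: "sq F B (Suc s) = sq F B s - {rt F (sq F B s)}" by (simp add: sq_def)
lemma sq_Suc_left: "sq F B (Suc s) = sq F (B - {rt F B}) s"
  unfolding sq_def by (simp only: funpow_Suc_right o_apply)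

lemma sq_sub: "sq F B s \<subseteq> B"
  by (induction s) (auto simp: sq_Suc)

lemma sq_mono: "s \<le> s' \<Longrightarrow> sq F B s' \<subseteq> sq F B s"
proof (induction s' rule: dec_induct)
  case (step s') then show ?case by (auto simp: sq_Suc)
qed simp

lemma sq_card: "finite B \<Longrightarrow> card (sq F B s) = card B - s"
proof (induction s)
  case (Suc s)
  have fin: "finite (sq F B s)" using finite_subset[OF sq_sub Suc.prems] .
  show ?case
  proof (cases "sq F B s = {}")
    case True then show ?thesis using Suc by (simp add: sq_Suc)
  next
    case False
    then have "rt F (sq F B s) \<in> sq F B s" by (rule rt_in)
    then show ?thesis using Suc fin by (simp add: sq_Suc)
  qed
qed simp

definition stp :: "nat set set \<Rightarrow> nat set \<Rightarrow> nat set \<Rightarrow> nat" where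
  "stp F A B = (LEAST s. rt F (sq F B s) \<in> A \<or> card (sq F B s) \<le> 1)"

lemma sq_last: "finite B \<Longrightarrow> card (sq F B (card B - 1)) \<le> 1"
  using sq_card[of B F "card B - 1"] by simp

lemma stp_prop: "finite B \<Longrightarrow> rt F (sq F B (stp F A B)) \<in> A \<or> card (sq F B (stp F A B)) \<le> 1"
  unfolding stp_def
  by (rule LeastI[of _ "card B - 1"], rule disjI2, erule sq_last)

lemma stp_le: "finite B \<Longrightarrow> stp F A B \<le> card B - 1"
  unfolding stp_def
  by (rule Least_le, rule disjI2, erule sq_last)

lemma stp_before: "s < stp F A B \<Longrightarrow> rt F (sq F B s) \<notin> A \<and> \<not> card (sq F B s) \<le> 1"
  unfolding stp_def using not_less_Least by blast

lemma stp_eq: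
  assumes "\<And>s. s < t \<Longrightarrow> rt F (sq F B s) \<notin> A \<and> \<not> card (sq F B s) \<le> 1"
    and "rt F (sq F B t) \<in> A \<or> card (sq F B t) \<le> 1"
  shows "stp F A B = t"
  unfolding stp_def
  by (rule Least_equality) (use assms in \<open>auto simp: not_less[symmetric]\<close>)

lemma ex_other:
  assumes "finite P" "\<not> card P \<le> 1"
  shows "\<exists>y. y \<in> P \<and> y \<noteq> z"
proof (rule ccontr)
  assume "\<not> ?thesis"
  then have "P \<subseteq> {z}" by auto
  then have "card P \<le> card {z}" by (intro card_mono) auto
  then show False using assms by simp
qed

definition PP :: "nat set set \<Rightarrow> nat set \<Rightarrow> nat set \<Rightarrow> nat set" where
  "PP F A B = sq F B (stp F A B)"

definition xx :: "nat set set \<Rightarrow> nat set \<Rightarrow> nat set \<Rightarrow> nat" where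
  "xx F A B = (if card (PP F A B) \<le> 1 then rt F (PP F A B)
      else (SOME y. y \<in> PP F A B \<and> y \<noteq> rt F (PP F A B)))"

definition mA :: "nat set set \<Rightarrow> nat set \<Rightarrow> nat set \<Rightarrow> nat set" where
  "mA F A B = (if xx F A B \<in> A then A - {xx F A B} else insert (xx F A B) A)"

definition key :: "nat \<Rightarrow> nat set set \<Rightarrow> nat set \<Rightarrow> nat set \<Rightarrow> nat" where
  "key n F A B = (card B * (n+1) + (card B - card (insert (xx F A B) A))) * (n+1) + stp F A B"

lemma xx_stp: "stp F A B = stp F A' B \<Longrightarrow> xx F A B = xx F A' B"
  unfolding xx_def PP_def by simp

context
  fixes F :: "nat set set" and A B :: "nat set"
  assumes finB: "finite B" and AB: "A \<subseteq> B" and Bne: "B \<noteq> {}"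
begin

lemma A_sub_sq: "s \<le> stp F A B \<Longrightarrow> A \<subseteq> sq F B s"
proof (induction s)
  case (Suc s)
  then have "rt F (sq F B s) \<notin> A" using stp_before by simp
  then show ?case using Suc by (auto simp: sq_Suc)
qed (use AB in simp)

lemma A_sub_PP: "A \<subseteq> PP F A B"
  unfolding PP_def by (rule A_sub_sq) simp

lemma PP_card: "card (PP F A B) \<ge> 1"
proof -
  have "card B \<ge> 1" using finB Bne by (simp add: Suc_le_eq card_gt_0_iff)
  then show ?thesis unfolding PP_def using stp_le[OF finB, of F A] sq_card[OF finB] by simp
qed

lemma PP_fin: "finite (PP F A B)"
  unfolding PP_def using finite_subset[OF sq_sub finB] .

lemma PP_sub: "PP F A B \<subseteq> B"
  unfolding PP_def by (rule sq_sub)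

lemma xx_in: "xx F A B \<in> PP F A B"
proof (cases "card (PP F A B) \<le> 1")
  case True
  have "PP F A B \<noteq> {}" using PP_card by auto
  then show ?thesis unfolding xx_def using rt_in True by simp
next
  case False
  then have "\<exists>y. y \<in> PP F A B \<and> y \<noteq> rt F (PP F A B)"
    by (intro ex_other PP_fin)
  from someI_ex[OF this] show ?thesis unfolding xx_def using False by simp
qed

lemma xx_big: "\<not> card (PP F A B) \<le> 1 \<Longrightarrow> xx F A B \<noteq> rt F (PP F A B) \<and> rt F (PP F A B) \<in> A"
proof -
  assume F: "\<not> card (PP F A B) \<le> 1"
  then have "\<exists>y. y \<in> PP F A B \<and> y \<noteq> rt F (PP F A B)"
    by (intro ex_other PP_fin)
  from someI_ex[OF this] have "xx F A B \<noteq> rt F (PP F A B)" unfolding xx_def using F by simp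
  moreover have "rt F (PP F A B) \<in> A" using stp_prop[OF finB, of F A] F unfolding PP_def by auto
  ultimately show ?thesis by simp
qed

lemma xx_B: "xx F A B \<in> B" using xx_in PP_sub by blast

lemma rt_ne_xx: "s < stp F A B \<Longrightarrow> rt F (sq F B s) \<noteq> xx F A B"
proof
  assume s: "s < stp F A B" and eq: "rt F (sq F B s) = xx F A B"
  have "PP F A B \<subseteq> sq F B (Suc s)" unfolding PP_def using s by (intro sq_mono) simp
  then show False using xx_in eq by (auto simp: sq_Suc)
qed

lemma stp_mA: "stp F (mA F A B) B = stp F A B"
proof (rule stp_eq)
  fix s assume s: "s < stp F A B"
  then have "rt F (sq F B s) \<notin> A" "\<not> card (sq F B s) \<le> 1" "rt F (sq F B s) \<noteq> xx F A B"
    using stp_before rt_ne_xx by auto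
  then show "rt F (sq F B s) \<notin> mA F A B \<and> \<not> card (sq F B s) \<le> 1"
    unfolding mA_def by auto
next
  show "rt F (sq F B (stp F A B)) \<in> mA F A B \<or> card (sq F B (stp F A B)) \<le> 1"
    using xx_big unfolding mA_def PP_def by auto
qed

lemma xx_mA: "xx F (mA F A B) B = xx F A B"
  using xx_stp[OF stp_mA] .

lemma mA_mA: "mA F (mA F A B) B = A"
proof -
  have "mA F (mA F A B) B = (if xx F A B \<in> mA F A B then mA F A B - {xx F A B}
      else insert (xx F A B) (mA F A B))"
    using mA_def[of F "mA F A B" B] xx_mA by simp
  then show ?thesis by (auto simp: mA_def)
qed

lemma mA_sub: "mA F A B \<subseteq> B"
  unfolding mA_def using AB xx_B by auto

lemma key_mA: "key n F (mA F A B) B = key n F A B"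
  unfolding key_def xx_mA stp_mA by (simp add: mA_def)

lemma sq_in_F:
  assumes "ival A B \<subseteq> F" "s \<le> stp F A B"
  shows "sq F B s \<in> F"
proof -
  have "A \<subseteq> sq F B s" using A_sub_sq[OF assms(2)] .
  moreover have "sq F B s \<subseteq> B" by (rule sq_sub)
  ultimately have "sq F B s \<in> ival A B" unfolding ival_def by simp
  then show ?thesis using assms(1) by blast
qed

end

lemma lift_ival:
  assumes "\<And>s. s < t \<Longrightarrow> ival {rt F (sq F B s)} (sq F B s) \<subseteq> F"
    and "ival A' (sq F B t) \<subseteq> F"
  shows "ival A' B \<subseteq> F"
  using assms
proof (induction t arbitrary: B)
  case 0 then show ?case by simp
next
  case (Suc t)
  have "ival A' (B - {rt F B}) \<subseteq> F"
  proof (rule Suc.IH)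
    fix s assume "s < t"
    then show "ival {rt F (sq F (B - {rt F B}) s)} (sq F (B - {rt F B}) s) \<subseteq> F"
      using Suc.prems(1)[of "Suc s"] by (simp add: sq_Suc_left)
  next
    show "ival A' (sq F (B - {rt F B}) t) \<subseteq> F" using Suc.prems(2) by (simp add: sq_Suc_left)
  qed
  moreover have "ival {rt F B} B \<subseteq> F" using Suc.prems(1)[of 0] by simp
  ultimately show ?case unfolding ival_def by blast
qed

lemma mA_ival:
  assumes sr: "simply_rooted F" and eF: "{} \<in> F"
    and finB: "finite B" and AB: "A \<subseteq> B" and Bne: "B \<noteq> {}" and iv: "ival A B \<subseteq> F"
  shows "ival (mA F A B) B \<subseteq> F"
proof (cases "xx F A B \<in> A")
  case False
  then show ?thesis using iv unfolding mA_def ival_def by auto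
next
  case True
  define A' where "A' = A - {xx F A B}"
  have mAe: "mA F A B = A'" unfolding mA_def A'_def using True by simp
  have PF: "PP F A B \<in> F" unfolding PP_def using sq_in_F[OF finB AB Bne iv] by simp
  have iA: "ival A' (PP F A B) \<subseteq> F"
  proof (cases "card (PP F A B) \<le> 1")
    case True
    have "PP F A B = {xx F A B}" using True PP_card[OF finB AB Bne] xx_in[OF finB AB Bne]
      by (metis card_1_singletonE le_antisym singletonD)
    then show ?thesis using PF eF unfolding ival_def by (auto simp: subset_singleton_iff)
  next
    case False
    then have "rt F (PP F A B) \<in> A'" using xx_big[OF finB AB Bne False] A'_def by auto
    moreover have "PP F A B \<noteq> {}" using PP_card[OF finB AB Bne, where F=F] by (auto simp del: One_nat_def)
    ultimately show ?thesis using rt_root[OF sr PF] unfolding ival_def by blast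
  qed
  have rts: "\<And>s. s < stp F A B \<Longrightarrow> ival {rt F (sq F B s)} (sq F B s) \<subseteq> F"
  proof -
    fix s assume s: "s < stp F A B"
    have "sq F B s \<in> F" using sq_in_F[OF finB AB Bne iv] s by simp
    moreover have "sq F B s \<noteq> {}" using stp_before[OF s] by auto
    ultimately show "ival {rt F (sq F B s)} (sq F B s) \<subseteq> F" using rt_root[OF sr] by blast
  qed
  show ?thesis unfolding mAe by (rule lift_ival[of "stp F A B", OF rts iA[unfolded PP_def]])
qed

lemma key_arith1:
  fixes b b' d d' t t' N :: nat
  assumes "b' < b" "d' < N" "t' < N"
  shows "(b' * N + d') * N + t' < (b * N + d) * N + t"
proof -
  have "(b' * N + d') * N + t' < (b' * N + d') * N + N" using assms by simp
  also have "\<dots> = (b' * N + d' + 1) * N" by (simp add: algebra_simps)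
  also have "\<dots> \<le> (b' * N + N) * N" using assms by (intro mult_le_mono1) simp
  also have "\<dots> = (b' + 1) * N * N" by (simp add: algebra_simps)
  also have "\<dots> \<le> b * N * N" using assms by (intro mult_le_mono1) simp
  also have "\<dots> \<le> (b * N + d) * N + t" by (simp add: algebra_simps)
  finally show ?thesis .
qed

lemma key_arith2:
  fixes b d d' t t' N :: nat
  assumes "d' < d" "t' < N"
  shows "(b * N + d') * N + t' < (b * N + d) * N + t"
proof -
  have "(b * N + d') * N + t' < (b * N + d') * N + N" using assms by simp
  also have "\<dots> = (b * N + d' + 1) * N" by (simp add: algebra_simps)
  also have "\<dots> \<le> (b * N + d) * N" using assms by (intro mult_le_mono1) simp
  finally show ?thesis by simp
qed

lemma key_lo:
  assumes finB: "finite B" and cB: "card B \<le> n" and AB: "A \<subseteq> B" and j: "j \<in> B - A"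
  shows "key n F A (B - {j}) < key n F A B"
proof -
  have lt: "card (B - {j}) < card B" by (rule card_Diff1_less) (use finB j in auto)
  moreover have "card (B - {j}) - card (insert (xx F A (B - {j})) A) < n + 1"
    using lt cB by linarith
  moreover have "stp F A (B - {j}) < n + 1"
    using stp_le[of "B - {j}" F A] finB lt cB by simp
  ultimately show ?thesis unfolding key_def by (rule key_arith1)
qed

lemma key_hi:
  assumes finB: "finite B" and cB: "card B \<le> n" and AB: "A \<subseteq> B" and j: "j \<in> B - A"
    and ne: "A \<noteq> mA F (insert j A) B"
  shows "key n F (insert j A) B < key n F A B"
proof -
  have Bne: "B \<noteq> {}" using j by auto
  define AQ where "AQ = insert j A"
  have AQB: "AQ \<subseteq> B" using AB j AQ_def by auto
  define x where "x = xx F AQ B"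
  define xR where "xR = xx F A B"
  have fA: "finite A" using AB finB finite_subset by blast
  have cAQ: "card AQ = card A + 1" using j fA AQ_def by simp
  have xB: "x \<in> B" using xx_B[OF finB AQB Bne] x_def by simp
  have c1: "card (insert x AQ) \<le> card B" using xB AQB finB by (intro card_mono) auto
  have c0: "card AQ \<le> card B" using AQB finB by (intro card_mono) auto
  have tQ: "stp F AQ B < n + 1" using stp_le[OF finB, of F AQ] cB by simp
  have kQ: "key n F AQ B = (card B * (n+1) + (card B - card (insert x AQ))) * (n+1) + stp F AQ B"
    unfolding key_def x_def ..
  have kR: "key n F A B = (card B * (n+1) + (card B - card (insert xR A))) * (n+1) + stp F A B"
    unfolding key_def xR_def ..
  show ?thesis
  proof (cases "x \<in> AQ")
    case False
    have "card (insert x AQ) = card A + 2" using False cAQ fA AQ_def by simp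
    moreover have "card (insert xR A) \<le> card A + 1" using fA by (simp add: card_insert_le_m1)
    ultimately have "card B - card (insert x AQ) < card B - card (insert xR A)"
      using c1 by linarith
    then show ?thesis unfolding AQ_def[symmetric] kQ kR using tQ by (rule key_arith2)
  next
    case True
    have xj: "x \<noteq> j"
    proof
      assume "x = j"
      then have "mA F AQ B = A" unfolding mA_def x_def[symmetric] using True j AQ_def by auto
      then show False using ne AQ_def by simp
    qed
    have cQ: "card (insert x AQ) = card A + 1" using True cAQ by (simp add: insert_absorb)
    show ?thesis
    proof (cases "xR \<in> A")
      case True
      then have "card (insert xR A) = card A" by (simp add: insert_absorb)
      then have "card B - card (insert x AQ) < card B - card (insert xR A)"
        using cQ c0 cAQ by linarith
      then show ?thesis unfolding AQ_def[symmetric] kQ kR using tQ by (rule key_arith2)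
    next
      case False
      have cR: "card (insert xR A) = card A + 1" using False fA by simp
      have ge: "\<not> stp F A B < stp F AQ B"
      proof
        assume lt: "stp F A B < stp F AQ B"
        have "rt F (sq F B (stp F A B)) \<in> A \<or> card (sq F B (stp F A B)) \<le> 1"
          by (rule stp_prop[OF finB])
        moreover have "rt F (sq F B (stp F A B)) \<notin> AQ \<and> \<not> card (sq F B (stp F A B)) \<le> 1"
          by (rule stp_before[OF lt])
        ultimately show False using AQ_def by auto
      qed
      have neq: "stp F A B \<noteq> stp F AQ B"
      proof
        assume "stp F A B = stp F AQ B"
        then have "xR = x" unfolding xR_def x_def by (rule xx_stp)
        then show False using False True xj AQ_def by auto
      qed
      have "stp F AQ B < stp F A B" using ge neq by linarith
      then show ?thesis unfolding AQ_def[symmetric] kQ kR cQ cR by simp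
    qed
  qed
qed



definition ec :: "nat set \<Rightarrow> nat set \<Rightarrow> ecube" where
  "ec A B = (\<lambda>i. if i \<in> A then (1, False) else if i \<in> B then (0, True) else (0, False))"

definition dA :: "ecube \<Rightarrow> nat set" where "dA Q = {i. Q i = (1, False)}"
definition dB :: "ecube \<Rightarrow> nat set" where "dB Q = {i. Q i = (1, False) \<or> snd (Q i)}"

lemma dA_ec: "A \<subseteq> B \<Longrightarrow> dA (ec A B) = A"
  unfolding dA_def ec_def by auto
lemma dB_ec: "A \<subseteq> B \<Longrightarrow> dB (ec A B) = B"
  unfolding dB_def ec_def by auto
lemma snd_ec: "snd (ec A B i) \<longleftrightarrow> i \<in> B \<and> i \<notin> A"
  unfolding ec_def by auto
lemma face_hi_ec: "j \<in> B \<Longrightarrow> j \<notin> A \<Longrightarrow> face_hi (ec A B) j = ec (insert j A) B"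
  unfolding face_hi_def ec_def by (auto simp: fun_eq_iff)
lemma face_lo_ec: "j \<in> B \<Longrightarrow> j \<notin> A \<Longrightarrow> face_lo (ec A B) j = ec A (B - {j})"
  unfolding face_lo_def ec_def by (auto simp: fun_eq_iff)
lemma ec_eq: "A \<subseteq> B \<Longrightarrow> A' \<subseteq> B' \<Longrightarrow> ec A B = ec A' B' \<Longrightarrow> A = A' \<and> B = B'"
  by (metis dA_ec dB_ec)

lemma cube_set_ec: "A \<subseteq> B \<Longrightarrow> cube_set (ec A B) = geom_real A B"
proof -
  assume AB: "A \<subseteq> B"
  have e: "\<And>x i. (real_of_int (fst (ec A B i)) \<le> x i \<and> x i \<le> real_of_int (fst (ec A B i)) + (if snd (ec A B i) then 1 else 0))
     \<longleftrightarrow> ((i \<in> A \<longrightarrow> x i = 1) \<and> (i \<in> B - A \<longrightarrow> 0 \<le> x i \<and> x i \<le> 1) \<and> (i \<notin> B \<longrightarrow> x i = 0))"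
    using AB by (auto simp: ec_def)
  show ?thesis unfolding cube_set_def geom_real_def e ..
qed

definition Kx :: "nat \<Rightarrow> (nat \<Rightarrow> real) set \<Rightarrow> ecube set" where
  "Kx n X = {Q. elem_cube n Q \<and> cube_set Q \<subseteq> X}"

lemma chains_eq: "chains n X k = chK (Kx n X) k"
  unfolding chains_def chK_def Kx_def supp_def by auto

lemma face_sub:
  assumes "snd (Q j)"
  shows "cube_set (face_hi Q j) \<subseteq> cube_set Q" "cube_set (face_lo Q j) \<subseteq> cube_set Q"
proof -
  show "cube_set (face_hi Q j) \<subseteq> cube_set Q"
  proof
    fix x assume x: "x \<in> cube_set (face_hi Q j)"
    show "x \<in> cube_set Q" unfolding cube_set_def
    proof (intro CollectI allI)
      fix i
      have "real_of_int (fst (face_hi Q j i)) \<le> x i \<and> x i \<le> real_of_int (fst (face_hi Q j i)) + (if snd (face_hi Q j i) then 1 else 0)"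
        using x unfolding cube_set_def by blast
      then show "real_of_int (fst (Q i)) \<le> x i \<and> x i \<le> real_of_int (fst (Q i)) + (if snd (Q i) then 1 else 0)"
        using assms by (cases "i = j") (auto simp: face_hi_def)
    qed
  qed
  show "cube_set (face_lo Q j) \<subseteq> cube_set Q"
  proof
    fix x assume x: "x \<in> cube_set (face_lo Q j)"
    show "x \<in> cube_set Q" unfolding cube_set_def
    proof (intro CollectI allI)
      fix i
      have "real_of_int (fst (face_lo Q j i)) \<le> x i \<and> x i \<le> real_of_int (fst (face_lo Q j i)) + (if snd (face_lo Q j i) then 1 else 0)"
        using x unfolding cube_set_def by blast
      then show "real_of_int (fst (Q i)) \<le> x i \<and> x i \<le> real_of_int (fst (Q i)) + (if snd (Q i) then 1 else 0)"
        using assms by (cases "i = j") (auto simp: face_lo_def)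
    qed
  qed
qed

lemma Kx_fclosed: "fclosed (Kx n X)"
  unfolding fclosed_def
proof (intro ballI allI impI)
  fix Q P assume Q: "Q \<in> Kx n X" and P: "bd_cube Q P \<noteq> 0"
  obtain j where j: "snd (Q j)" "P = face_hi Q j \<or> P = face_lo Q j" using bd_cube_nz[OF P] by blast
  have ej: "j \<in> {1..n}" using Q j unfolding Kx_def elem_cube_def by force
  have "elem_cube n P" using Q j ej unfolding Kx_def elem_cube_def face_hi_def face_lo_def by auto
  moreover have "cube_set P \<subseteq> X" using Q j face_sub[of Q j, OF j(1)] unfolding Kx_def by auto
  ultimately show "P \<in> Kx n X" unfolding Kx_def by simp
qed

lemma Kx_fin: "fin_dims (Kx n X)"
  unfolding fin_dims_def Kx_def elem_cube_def
proof (intro ballI)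
  fix Q assume "Q \<in> {Q. (\<forall>i. i \<notin> {1..n} \<longrightarrow> Q i = (0, False)) \<and> cube_set Q \<subseteq> X}"
  then have "{i. snd (Q i)} \<subseteq> {1..n}" by force
  then show "finite {i. snd (Q i)}" using finite_subset by blast
qed

lemma mem_XF: "x \<in> XF F \<longleftrightarrow> (\<exists>A B. A \<subseteq> B \<and> ival A B \<subseteq> F \<and> x \<in> geom_real A B)"
  unfolding XF_def cubes_of_def by blast

lemma geom_bounds: "x \<in> geom_real A B \<Longrightarrow> 0 \<le> x i \<and> x i \<le> 1"
proof -
  assume "x \<in> geom_real A B"
  then have "(i \<in> A \<longrightarrow> x i = 1) \<and> (i \<in> B - A \<longrightarrow> 0 \<le> x i \<and> x i \<le> 1) \<and> (i \<notin> B \<longrightarrow> x i = 0)"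
    unfolding geom_real_def by blast
  then show ?thesis by (cases "i \<in> A"; cases "i \<in> B") auto
qed

lemma Kx_char:
  assumes FP: "F \<subseteq> Pow {1..n}"
  shows "Q \<in> Kx n (XF F) \<longleftrightarrow> (\<exists>A B. Q = ec A B \<and> A \<subseteq> B \<and> ival A B \<subseteq> F)"
proof
  assume Q: "Q \<in> Kx n (XF F)"
  then have sub: "cube_set Q \<subseteq> XF F" unfolding Kx_def by simp
  have bnd: "\<And>x i. x \<in> cube_set Q \<Longrightarrow> 0 \<le> x i \<and> x i \<le> 1"
  proof -
    fix x i assume "x \<in> cube_set Q"
    then have "x \<in> XF F" using sub by blast
    then obtain A B where "x \<in> geom_real A B" unfolding mem_XF by blast
    then show "0 \<le> x i \<and> x i \<le> 1" by (rule geom_bounds)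
  qed
  define lo where "lo = (\<lambda>i. real_of_int (fst (Q i)))"
  define hi where "hi = (\<lambda>i. real_of_int (fst (Q i)) + (if snd (Q i) then 1 else 0))"
  have "lo \<in> cube_set Q" "hi \<in> cube_set Q" unfolding lo_def hi_def cube_set_def by auto
  then have "\<And>i. 0 \<le> lo i \<and> hi i \<le> 1" using bnd by blast
  then have vals: "\<And>i. Q i = (1, False) \<or> Q i = (0, True) \<or> Q i = (0, False)"
  proof -
    fix i assume "\<And>i. 0 \<le> lo i \<and> hi i \<le> 1"
    then have l: "0 \<le> lo i" "hi i \<le> 1" by auto
    have a1: "0 \<le> fst (Q i)" using l(1) unfolding lo_def by simp
    have a2: "fst (Q i) + (if snd (Q i) then 1 else 0) \<le> 1"
    proof (cases "snd (Q i)")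
      case True
      then have "real_of_int (fst (Q i)) + 1 \<le> 1" using l(2) unfolding hi_def by simp
      then have "fst (Q i) \<le> 0" by linarith
      then show ?thesis using True by simp
    next
      case False
      then have "real_of_int (fst (Q i)) \<le> 1" using l(2) unfolding hi_def by simp
      then have "fst (Q i) \<le> 1" by linarith
      then show ?thesis using False by simp
    qed
    note a = a1 a2
    show "Q i = (1, False) \<or> Q i = (0, True) \<or> Q i = (0, False)"
      using a by (cases "Q i"; cases "snd (Q i)") auto
  qed
  have Qe: "Q = ec (dA Q) (dB Q)"
  proof
    fix i show "Q i = ec (dA Q) (dB Q) i" using vals[of i] unfolding ec_def dA_def dB_def by auto
  qed
  have AB: "dA Q \<subseteq> dB Q" unfolding dA_def dB_def by auto
  have "ival (dA Q) (dB Q) \<subseteq> F"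
  proof
    fix C assume C: "C \<in> ival (dA Q) (dB Q)"
    define p where "p = (\<lambda>i. if i \<in> C then (1::real) else 0)"
    have "p \<in> cube_set Q"
      unfolding cube_set_def
    proof (intro CollectI allI)
      fix i show "real_of_int (fst (Q i)) \<le> p i \<and> p i \<le> real_of_int (fst (Q i)) + (if snd (Q i) then 1 else 0)"
        using vals[of i] C unfolding p_def ival_def dA_def dB_def by auto
    qed
    then have "p \<in> XF F" using sub by blast
    then obtain A' B' where A'B': "A' \<subseteq> B'" "ival A' B' \<subseteq> F" "p \<in> geom_real A' B'"
      unfolding mem_XF by blast
    have "A' \<subseteq> C" using A'B'(3) unfolding geom_real_def p_def by (auto split: if_splits)
    moreover have "C \<subseteq> B'"
    proof
      fix i assume "i \<in> C"
      then have "p i = 1" unfolding p_def by simp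
      then show "i \<in> B'" using A'B'(3) unfolding geom_real_def by force
    qed
    ultimately show "C \<in> F" using A'B'(2) unfolding ival_def by blast
  qed
  then show "\<exists>A B. Q = ec A B \<and> A \<subseteq> B \<and> ival A B \<subseteq> F" using Qe AB by blast
next
  assume "\<exists>A B. Q = ec A B \<and> A \<subseteq> B \<and> ival A B \<subseteq> F"
  then obtain A B where Q: "Q = ec A B" "A \<subseteq> B" "ival A B \<subseteq> F" by blast
  have "B \<in> F" using Q unfolding ival_def by blast
  then have "B \<subseteq> {1..n}" using FP by blast
  then have "elem_cube n Q" unfolding elem_cube_def Q(1) ec_def using Q(2) by auto
  moreover have "cube_set Q \<subseteq> XF F" unfolding Q(1) cube_set_ec[OF Q(2)]
  proof
    fix x assume "x \<in> geom_real A B"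
    then show "x \<in> XF F" unfolding mem_XF using Q by blast
  qed
  ultimately show "Q \<in> Kx n (XF F)" unfolding Kx_def by simp
qed



lemma acyc_main:
  assumes FP: "F \<subseteq> Pow {1..n}" and sr: "simply_rooted F" and eF: "{} \<in> F"
  shows "acycK (Kx n (XF F))"
proof -
  define K0 where "K0 = Kx n (XF F)"
  define v where "v = ec {} {}"
  define mate where "mate Q = ec (mA F (dA Q) (dB Q)) (dB Q)" for Q
  define kap where "kap Q = key n F (dA Q) (dB Q)" for Q
  have memK: "\<And>Q. Q \<in> K0 \<longleftrightarrow> (\<exists>A B. Q = ec A B \<and> A \<subseteq> B \<and> ival A B \<subseteq> F)"
    unfolding K0_def by (rule Kx_char[OF FP])
  have Bp: "finite B \<and> card B \<le> n \<and> B \<subseteq> {1..n}" if "ival A B \<subseteq> F" "A \<subseteq> B" for A B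
  proof -
    have "B \<in> F" using that unfolding ival_def by blast
    then have B: "B \<subseteq> {1..n}" using FP by blast
    then have "card B \<le> card {1..n}" by (intro card_mono) auto
    then show ?thesis using B finite_subset by auto
  qed
  have fK0: "finite K0"
  proof (rule finite_subset)
    show "K0 \<subseteq> (\<lambda>(A, B). ec A B) ` (Pow {1..n} \<times> Pow {1..n})"
    proof
      fix Q assume "Q \<in> K0"
      then obtain A B where Q: "Q = ec A B" "A \<subseteq> B" "ival A B \<subseteq> F" using memK by blast
      then have "(A, B) \<in> Pow {1..n} \<times> Pow {1..n}" using Bp[OF Q(3) Q(2)] by auto
      then show "Q \<in> (\<lambda>(A, B). ec A B) ` (Pow {1..n} \<times> Pow {1..n})" using Q(1) by force
    qed
  qed simp
  have vK0: "v \<in> K0" unfolding memK v_def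
    by (rule exI[of _ "{}"], rule exI[of _ "{}"]) (use eF in \<open>auto simp: ival_def\<close>)
  have vd: "{i. snd (v i)} = {}" unfolding v_def by (simp add: snd_ec)
  have fd0: "fin_dims K0" unfolding K0_def by (rule Kx_fin)
  have decomp: "\<exists>A B. Q = ec A B \<and> A \<subseteq> B \<and> ival A B \<subseteq> F \<and> B \<noteq> {}" if Qin: "Q \<in> K0 - {v}" for Q
  proof -
    obtain A B where Q: "Q = ec A B" "A \<subseteq> B" "ival A B \<subseteq> F" using Qin memK by blast
    have "B \<noteq> {}" using Q Qin v_def by auto
    then show ?thesis using Q by blast
  qed
  have mate_ok: "\<forall>Q\<in>K0-{v}. mate Q \<in> K0 - {v} \<and> mate (mate Q) = Q \<and> kap (mate Q) = kap Q \<and>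
        ((\<exists>j. snd (Q j) \<and> mate Q = face_hi Q j) \<or> (\<exists>j. snd (mate Q j) \<and> Q = face_hi (mate Q) j))"
  proof
    fix Q assume QK: "Q \<in> K0 - {v}"
    then obtain A B where Q: "Q = ec A B" "A \<subseteq> B" "ival A B \<subseteq> F" "B \<noteq> {}"
      using decomp by blast
    have fB: "finite B" using Bp[OF Q(3) Q(2)] by simp
    have dQ: "dA Q = A" "dB Q = B" using Q dA_ec dB_ec by auto
    define A' where "A' = mA F A B"
    have mQ: "mate Q = ec A' B" unfolding mate_def dQ A'_def ..
    have A'B: "A' \<subseteq> B" unfolding A'_def by (rule mA_sub[OF fB Q(2) Q(4)])
    have A'iv: "ival A' B \<subseteq> F" unfolding A'_def by (rule mA_ival[OF sr eF fB Q(2) Q(4) Q(3)])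
    have "mate Q \<in> K0" unfolding mQ memK using A'B A'iv by blast
    moreover have "mate Q \<noteq> v"
    proof
      assume "mate Q = v"
      then have "ec A' B = ec {} {}" unfolding mQ v_def by simp
      then show False using ec_eq[OF A'B, of "{}" "{}"] Q(4) by simp
    qed
    moreover have "mate (mate Q) = Q"
    proof -
      have "mate (mate Q) = mate (ec A' B)" using mQ by simp
      also have "\<dots> = ec (mA F A' B) B" unfolding mate_def dA_ec[OF A'B] dB_ec[OF A'B] ..
      also have "\<dots> = Q" unfolding A'_def mA_mA[OF fB Q(2) Q(4)] Q(1) ..
      finally show ?thesis .
    qed
    moreover have "kap (mate Q) = kap Q"
    proof -
      have "kap (mate Q) = kap (ec A' B)" using mQ by simp
      also have "\<dots> = key n F A' B" unfolding kap_def dA_ec[OF A'B] dB_ec[OF A'B] ..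
      also have "\<dots> = key n F A B" unfolding A'_def by (rule key_mA[OF fB Q(2) Q(4)])
      also have "\<dots> = kap Q" unfolding kap_def dQ ..
      finally show ?thesis .
    qed
    moreover have "(\<exists>j. snd (Q j) \<and> mate Q = face_hi Q j) \<or> (\<exists>j. snd (mate Q j) \<and> Q = face_hi (mate Q) j)"
    proof -
      define x where "x = xx F A B"
      have xB: "x \<in> B" unfolding x_def by (rule xx_B[OF fB Q(2) Q(4)])
      show ?thesis
      proof (cases "x \<in> A")
        case False
        have "A' = insert x A" unfolding A'_def mA_def x_def[symmetric] using False by simp
        then have m1: "mate Q = ec (insert x A) B" using mQ by simp
        have "face_hi Q x = ec (insert x A) B" using Q(1) face_hi_ec[OF xB False] by simp
        then have "mate Q = face_hi Q x" using m1 by simp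
        moreover have "snd (Q x)" unfolding Q(1) snd_ec using xB False by simp
        ultimately show ?thesis by blast
      next
        case True
        have A'e: "A' = A - {x}" unfolding A'_def mA_def x_def[symmetric] using True by simp
        have "face_hi (mate Q) x = ec (insert x (A - {x})) B" unfolding mQ A'e
          by (rule face_hi_ec[OF xB]) simp
        also have "insert x (A - {x}) = A" using True by auto
        finally have "Q = face_hi (mate Q) x" using Q(1) by simp
        moreover have "snd (mate Q x)" unfolding mQ snd_ec A'e using xB by simp
        ultimately show ?thesis by blast
      qed
    qed
    ultimately show "mate Q \<in> K0 - {v} \<and> mate (mate Q) = Q \<and> kap (mate Q) = kap Q \<and>
        ((\<exists>j. snd (Q j) \<and> mate Q = face_hi Q j) \<or> (\<exists>j. snd (mate Q j) \<and> Q = face_hi (mate Q) j))"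
      by blast
  qed
  have coface: "\<forall>Q\<in>K0-{v}. \<forall>R\<in>K0. bd_cube R Q \<noteq> 0 \<longrightarrow> R \<noteq> mate Q \<longrightarrow> kap Q < kap R"
  proof (intro ballI impI)
    fix Q R assume QK: "Q \<in> K0 - {v}" and RK: "R \<in> K0" and bQ: "bd_cube R Q \<noteq> 0" and Rm: "R \<noteq> mate Q"
    obtain A B where R: "R = ec A B" "A \<subseteq> B" "ival A B \<subseteq> F" using RK memK by blast
    have BB: "finite B" "card B \<le> n" using Bp[OF R(3) R(2)] by auto
    obtain j where j: "snd (R j)" "Q = face_hi R j \<or> Q = face_lo R j" using bd_cube_nz[OF bQ] by blast
    have jBA: "j \<in> B" "j \<notin> A" using j(1) unfolding R(1) snd_ec by auto
    have kR: "kap R = key n F A B" unfolding kap_def R(1) dA_ec[OF R(2)] dB_ec[OF R(2)] ..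
    show "kap Q < kap R"
    proof (cases "Q = face_hi R j")
      case True
      then have Qe: "Q = ec (insert j A) B" unfolding R(1) using face_hi_ec[OF jBA] by simp
      have jAB: "insert j A \<subseteq> B" using jBA R(2) by auto
      have kQ: "kap Q = key n F (insert j A) B" unfolding kap_def Qe dA_ec[OF jAB] dB_ec[OF jAB] ..
      have "A \<noteq> mA F (insert j A) B"
      proof
        assume "A = mA F (insert j A) B"
        then have "R = mate Q" unfolding mate_def Qe dA_ec[OF jAB] dB_ec[OF jAB] R(1) by simp
        then show False using Rm by simp
      qed
      then show ?thesis unfolding kQ kR using key_hi[OF BB R(2) _ ] jBA by simp
    next
      case False
      then have "Q = face_lo R j" using j by simp
      then have Qe: "Q = ec A (B - {j})" unfolding R(1) using face_lo_ec[OF jBA] by simp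
      have jAB: "A \<subseteq> B - {j}" using jBA R(2) by auto
      have kQ: "kap Q = key n F A (B - {j})" unfolding kap_def Qe dA_ec[OF jAB] dB_ec[OF jAB] ..
      show ?thesis unfolding kQ kR using key_lo[OF BB R(2)] jBA by simp
    qed
  qed
  have "acycK K0"
    by (rule morse[OF fK0 vK0 vd fd0 mate_ok coface])
      (use vK0 mate_ok in \<open>auto simp: K0_def Kx_fclosed\<close>)
  then show ?thesis unfolding K0_def .
qed



definition segf :: "(nat \<Rightarrow> real) \<Rightarrow> (nat \<Rightarrow> real) \<Rightarrow> real \<Rightarrow> (nat \<Rightarrow> real)" where
  "segf x y t = (\<lambda>i. (1 - t) * x i + t * y i)"

lemma seg_conn: "connected (segf x y ` {0..1})"
proof (rule connected_continuous_image)
  show "continuous_on {0..1} (segf x y)"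
    unfolding segf_def by (intro continuous_on_coordinatewise_then_product continuous_intros)
qed simp

lemma seg_ends: "x \<in> segf x y ` {0..1}" "y \<in> segf x y ` {0..1}"
proof -
  have "segf x y 0 = x" "segf x y 1 = y" unfolding segf_def by auto
  then show "x \<in> segf x y ` {0..1}" "y \<in> segf x y ` {0..1}"
    by (metis atLeastAtMost_iff image_eqI order_refl zero_le_one)+
qed

lemma geom_convex:
  assumes "x \<in> geom_real A B" "y \<in> geom_real A B" "0 \<le> t" "t \<le> 1"
  shows "segf x y t \<in> geom_real A B"
  unfolding geom_real_def segf_def
proof (intro CollectI allI)
  fix i
  have x: "(i \<in> A \<longrightarrow> x i = 1) \<and> (i \<in> B - A \<longrightarrow> 0 \<le> x i \<and> x i \<le> 1) \<and> (i \<notin> B \<longrightarrow> x i = 0)"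
    using assms(1) unfolding geom_real_def by blast
  have y: "(i \<in> A \<longrightarrow> y i = 1) \<and> (i \<in> B - A \<longrightarrow> 0 \<le> y i \<and> y i \<le> 1) \<and> (i \<notin> B \<longrightarrow> y i = 0)"
    using assms(2) unfolding geom_real_def by blast
  have h1: "i \<in> B - A \<Longrightarrow> 0 \<le> (1 - t) * x i + t * y i"
    using x y assms by simp
  have h2: "i \<in> B - A \<Longrightarrow> (1 - t) * x i + t * y i \<le> 1"
    using x y assms by (intro convex_bound_le) auto
  show "(i \<in> A \<longrightarrow> (1 - t) * x i + t * y i = 1) \<and>
         (i \<in> B - A \<longrightarrow> 0 \<le> (1 - t) * x i + t * y i \<and> (1 - t) * x i + t * y i \<le> 1) \<and>
         (i \<notin> B \<longrightarrow> (1 - t) * x i + t * y i = 0)"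
  proof (intro conjI impI)
    assume "i \<in> A" then show "(1 - t) * x i + t * y i = 1" using x y by (simp add: algebra_simps)
  next
    assume "i \<notin> B" then show "(1 - t) * x i + t * y i = 0" using x y by simp
  qed (use h1 h2 in auto)
qed

lemma geom_conn:
  assumes p: "p \<in> geom_real A B"
  shows "connected (geom_real A B)"
proof -
  have eq: "geom_real A B = \<Union> ((\<lambda>y. segf p y ` {0..1}) ` geom_real A B)"
  proof
    show "geom_real A B \<subseteq> \<Union> ((\<lambda>y. segf p y ` {0..1}) ` geom_real A B)"
    proof
      fix y assume "y \<in> geom_real A B"
      then show "y \<in> \<Union> ((\<lambda>y. segf p y ` {0..1}) ` geom_real A B)"
        using seg_ends(2)[of y p] by (intro UN_I)
    qed
    show "\<Union> ((\<lambda>y. segf p y ` {0..1}) ` geom_real A B) \<subseteq> geom_real A B"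
      using geom_convex[OF p] by auto
  qed
  have "connected (\<Union> ((\<lambda>y. segf p y ` {0..1}) ` geom_real A B))"
  proof (rule connected_Union)
    show "\<And>s. s \<in> (\<lambda>y. segf p y ` {0..1}) ` geom_real A B \<Longrightarrow> connected s"
      using seg_conn by blast
    have "p \<in> \<Inter> ((\<lambda>y. segf p y ` {0..1}) ` geom_real A B)"
      using seg_ends(1)[of p] by (intro INT_I)
    then show "\<Inter> ((\<lambda>y. segf p y ` {0..1}) ` geom_real A B) \<noteq> {}" by blast
  qed
  then show ?thesis using eq by simp
qed

definition ind :: "nat set \<Rightarrow> nat \<Rightarrow> real" where
  "ind S = (\<lambda>i. if i \<in> S then 1 else 0)"

lemma ind_geom: "A \<subseteq> C \<Longrightarrow> C \<subseteq> B \<Longrightarrow> ind C \<in> geom_real A B"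
  unfolding ind_def geom_real_def by auto

lemma geom_sub_XF: "A \<subseteq> B \<Longrightarrow> ival A B \<subseteq> F \<Longrightarrow> geom_real A B \<subseteq> XF F"
  unfolding XF_def cubes_of_def by blast

lemma XF_connected:
  assumes sr: "simply_rooted F" and eF: "{} \<in> F"
  shows "connected (XF F)"
proof -
  define Y where "Y = (\<lambda>(A, B). if A = {} then geom_real A B
      else geom_real A B \<union> geom_real {rt F A} A \<union> geom_real {} {rt F A})"
  have z: "ind {} \<in> geom_real {} C" for C by (rule ind_geom) auto
  have YF: "Y c \<subseteq> XF F \<and> ind {} \<in> Y c \<and> connected (Y c)" if c: "c \<in> cubes_of F" for c
  proof -
    obtain A B where cAB: "c = (A, B)" by fastforce
    have AB: "A \<subseteq> B" "ival A B \<subseteq> F" using c cAB unfolding cubes_of_def by auto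
    have gAB: "geom_real A B \<subseteq> XF F"
    proof
      fix x assume "x \<in> geom_real A B"
      then show "x \<in> XF F" unfolding mem_XF using AB by blast
    qed
    show ?thesis
    proof (cases "A = {}")
      case True
      then show ?thesis using gAB z geom_conn[OF z] cAB Y_def by simp
    next
      case False
      define r where "r = rt F A"
      have rA: "r \<in> A" unfolding r_def using rt_in[OF False] .
      have AF: "A \<in> F" using AB unfolding ival_def by blast
      have iv1: "ival {r} A \<subseteq> F" unfolding r_def by (rule rt_root[OF sr AF False])
      have "{r} \<in> F" using iv1 rA unfolding ival_def by blast
      then have iv2: "ival {} {r} \<subseteq> F" using eF unfolding ival_def by (auto simp: subset_singleton_iff)
      have g1: "geom_real {r} A \<subseteq> XF F" using iv1 rA by (intro geom_sub_XF) auto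
      have g2: "geom_real {} {r} \<subseteq> XF F" using iv2 by (intro geom_sub_XF) auto
      have Yc: "Y c = geom_real A B \<union> geom_real {r} A \<union> geom_real {} {r}"
        unfolding Y_def cAB r_def using False by simp
      have p1: "ind A \<in> geom_real A B" "ind A \<in> geom_real {r} A"
        using AB rA by (auto intro: ind_geom)
      have p2: "ind {r} \<in> geom_real {r} A" "ind {r} \<in> geom_real {} {r}"
        using rA by (auto intro: ind_geom)
      have c1: "connected (geom_real A B \<union> geom_real {r} A)"
        by (rule connected_Un) (use p1 geom_conn in blast)+
      have c2: "connected (geom_real A B \<union> geom_real {r} A \<union> geom_real {} {r})"
        by (rule connected_Un[OF c1]) (use p2 geom_conn in blast)+
      show ?thesis unfolding Yc using c2 g1 g2 gAB z by auto
    qed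
  qed
  have eq: "XF F = \<Union> (Y ` cubes_of F)"
  proof
    show "XF F \<subseteq> \<Union> (Y ` cubes_of F)"
    proof
      fix x assume "x \<in> XF F"
      then obtain A B where c: "(A, B) \<in> cubes_of F" "x \<in> geom_real A B"
        unfolding XF_def by blast
      then have "x \<in> Y (A, B)" unfolding Y_def by auto
      then show "x \<in> \<Union> (Y ` cubes_of F)" using c by blast
    qed
    show "\<Union> (Y ` cubes_of F) \<subseteq> XF F" using YF by blast
  qed
  have "connected (\<Union> (Y ` cubes_of F))"
  proof (rule connected_Union)
    show "\<And>s. s \<in> Y ` cubes_of F \<Longrightarrow> connected s" using YF by blast
    have "ind {} \<in> \<Inter> (Y ` cubes_of F)" using YF by blast
    then show "\<Inter> (Y ` cubes_of F) \<noteq> {}" by blast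
  qed
  then show ?thesis using eq by simp
qed

theorem theorem1:
  fixes n :: nat and F :: "nat set set"
  assumes "n \<ge> 1"
    and "F \<subseteq> Pow {1..n}"
    and "simply_rooted F"
    and "{} \<in> F"
  shows "acyclic_cubical n (XF F)"
proof -
  have "ind {} \<in> XF F"
  proof -
    have "({}, {}) \<in> cubes_of F" using assms(4) unfolding cubes_of_def ival_def by auto
    moreover have "ind {} \<in> geom_real {} {}" by (rule ind_geom) auto
    ultimately show ?thesis unfolding XF_def by blast
  qed
  then have ne: "XF F \<noteq> {}" by blast
  have ac: "acycK (Kx n (XF F))" by (rule acyc_main[OF assms(2-4)])
  have "\<forall>k\<ge>1. homology_trivial n (XF F) k"
    using ac unfolding homology_trivial_def chains_eq acycK_def by blast
  then show ?thesis unfolding acyclic_cubical_def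
    using ne XF_connected[OF assms(3,4)] by blast
qed


end
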